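(* For every $\varepsilon>0$ there exists $x_2=x_2(\varepsilon)$ such that for all $x\ge x_2$, $$\mathcal{J}(x) > \exp\left\{ (2-\varepsilon)\frac{\sqrt{\log x}}{\log\log x} \right\}.$$
   Context: A positive integer $n$ is a Jordan-Pólya number if it can be written as a product of factorials, i.e. $n=a_1!a_2!\cdots a_r!$ for some integer $r\ge 1$ and positive integers $a_1,\dots,a_r$ (so $1=1!$ is one). Let $\mathcal{J}$ be the set of Jordan-Pólya numbers and $\mathcal{J}(x)=\#\{n\le x: n\in\mathcal{J}\}$ its counting function. $\log$ denotes the natural logarithm. *)

theory Defs
  imports "HOL-Analysis.Analysis"
begin

definition jordan_polya :: "nat \<Rightarrow> bool" where
  "jordan_polya n \<longleftrightarrow>
     (\<exists>as :: nat list. as \<noteq> [] \<and> (\<forall>a\<in>set as. 0 < a) \<and> n = prod_list (map fact as))"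

definition JP_count :: "real \<Rightarrow> nat" where
  "JP_count x = card {n :: nat. 0 < n \<and> real n \<le> x \<and> jordan_polya n}"

end

theory Submission
  imports Defs "HOL-Library.Multiset" "HOL-Real_Asymp.Real_Asymp"
begin


lemma pow_gt0: assumes "prime (p::nat)" shows "n < p ^ n"
proof -
  have "n < 2^n" by (rule less_exp)
  also have "(2::nat)^n \<le> p^n" using prime_ge_2_nat[OF assms] by (rule power_mono) simp
  finally show ?thesis .
qed

lemma pow_gt: assumes "prime (p::nat)" shows "n < p ^ n" using pow_gt0[OF assms] .

lemma mult_lt: assumes "prime (p::nat)" "m > 0" shows "multiplicity p m < m"
proof -
  have "p ^ multiplicity p m dvd m" by (rule multiplicity_dvd)
  hence "p ^ multiplicity p m \<le> m" using assms(2) by (rule dvd_imp_le)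
  moreover have "multiplicity p m < p ^ multiplicity p m"
    using pow_gt0[OF assms(1)] .
  ultimately show ?thesis by simp
qed


lemma legendre:
  assumes p: "prime (p::nat)"
  shows "multiplicity p (fact n :: nat) = (\<Sum>i\<in>{1..n}. n div p^i)"
proof (induction n)
  case 0 then show ?case by simp
next
  case (Suc n)
  have "multiplicity p (fact (Suc n) :: nat) = multiplicity p (Suc n) + multiplicity p (fact n :: nat)"
  proof -
    have "(fact (Suc n)::nat) = Suc n * fact n" by (metis fact_Suc of_nat_id)
    moreover have "multiplicity p (Suc n * fact n) = multiplicity p (Suc n) + multiplicity p (fact n :: nat)"
      by (rule prime_elem_multiplicity_mult_distrib) (use p in auto)
    ultimately show ?thesis by simp
  qed
  also have "multiplicity p (Suc n) = card {i\<in>{1..Suc n}. p^i dvd Suc n}"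
  proof -
    have "{i\<in>{1..Suc n}. p^i dvd Suc n} = {1..multiplicity p (Suc n)}"
      using mult_lt[OF p, of "Suc n"] p prime_gt_1_nat[OF p]
      by (auto simp: power_dvd_iff_le_multiplicity)
    thus ?thesis by simp
  qed
  also have "\<dots> = (\<Sum>i\<in>{1..Suc n}. if p^i dvd Suc n then 1 else 0)"
    by (subst sum.inter_filter[symmetric]) simp_all
  finally have 1: "multiplicity p (fact (Suc n) :: nat) = (\<Sum>i\<in>{1..Suc n}. if p^i dvd Suc n then 1 else 0) + (\<Sum>i\<in>{1..n}. n div p^i)"
    using Suc by simp
  have "(\<Sum>i\<in>{1..Suc n}. n div p^i) = (\<Sum>i\<in>{1..n}. n div p^i) + n div p^(Suc n)"
    by simp
  also have "n div p^(Suc n) = 0" using pow_gt[OF p, of "Suc n"] by simp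
  finally have 2: "(\<Sum>i\<in>{1..Suc n}. n div p^i) = (\<Sum>i\<in>{1..n}. n div p^i)" by simp
  have "(\<Sum>i\<in>{1..Suc n}. Suc n div p^i) = (\<Sum>i\<in>{1..Suc n}. n div p^i + (if p^i dvd Suc n then 1 else 0))"
    by (intro sum.cong refl) (auto simp: div_Suc mod_eq_0_iff_dvd)
  also have "\<dots> = (\<Sum>i\<in>{1..Suc n}. n div p^i) + (\<Sum>i\<in>{1..Suc n}. if p^i dvd Suc n then 1 else 0)"
    by (simp add: sum.distrib)
  finally show ?case using 1 2 by simp
qed




lemma div_aux: "(q::nat) > 0 \<Longrightarrow> (2*n) div q \<le> 2*(n div q) + (if q \<le> 2*n then 1 else 0)"
proof (cases "q \<le> 2*n")
  case True
  assume q: "q > 0"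
  have nq: "n = q * (n div q) + n mod q" by simp
  have "2*n = q * (2*(n div q)) + 2*(n mod q)" 
  proof -
    have "q*(2*(n div q)) = 2*(q*(n div q))" by simp
    then show ?thesis using nq by linarith
  qed
  moreover have "2*(n mod q) < 2*q" using q by simp
  ultimately have "2*n < q * (2*(n div q) + 2)" by (simp add: algebra_simps)
  hence "(2*n) div q < 2*(n div q) + 2" by (simp add: div_less_iff_less_mult q mult.commute)
  thus ?thesis using True by simp
qed simp

lemma binom_pp:
  assumes p: "prime (p::nat)" and n: "n > 0"
  shows "p ^ multiplicity p ((2*n) choose n) \<le> 2*n"
proof -
  define C where "C = (2*n) choose n"
  define S where "S = {i\<in>{1..2*n}. p^i \<le> 2*n}"
  have Cpos: "C > 0" unfolding C_def by simp
  have "fact (2*n) = (fact n * fact n * C :: nat)"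
    using binomial_fact_lemma[of n "2*n"] by (simp add: C_def mult_2)
  hence "multiplicity p (fact (2*n) :: nat) = multiplicity p (fact n :: nat) + multiplicity p (fact n :: nat) + multiplicity p C"
    using p Cpos by (simp add: prime_elem_multiplicity_mult_distrib)
  moreover have "multiplicity p (fact n :: nat) = (\<Sum>i\<in>{1..2*n}. n div p^i)"
  proof -
    have "(\<Sum>i\<in>{1..2*n}. n div p^i) = (\<Sum>i\<in>{1..n}. n div p^i)"
    proof (rule sum.mono_neutral_right)
      show "\<forall>i\<in>{1..2 * n} - {1..n}. n div p ^ i = 0"
      proof
        fix i assume "i \<in> {1..2 * n} - {1..n}"
        hence "n < i" by auto
        also have "i < p^i" by (rule pow_gt[OF p])
        finally show "n div p^i = 0" by simp
      qed
    qed auto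
    thus ?thesis using legendre[OF p] by simp
  qed
  moreover have "multiplicity p (fact (2*n) :: nat) = (\<Sum>i\<in>{1..2*n}. (2*n) div p^i)"
    using legendre[OF p] by simp
  moreover have "(\<Sum>i\<in>{1..2*n}. (2*n) div p^i) \<le> (\<Sum>i\<in>{1..2*n}. 2*(n div p^i) + (if p^i \<le> 2*n then 1 else 0))"
    by (intro sum_mono div_aux) (use p prime_gt_0_nat in auto)
  moreover have "(\<Sum>i\<in>{1..2*n}. 2*(n div p^i) + (if p^i \<le> 2*n then 1 else 0)) = 2*(\<Sum>i\<in>{1..2*n}. n div p^i) + card S"
    unfolding S_def by (simp add: sum.distrib sum_distrib_left sum.inter_filter[symmetric])
  ultimately have m: "multiplicity p C \<le> card S" by simp
  have "p ^ card S \<le> 2*n"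
  proof (cases "S = {}")
    case True thus ?thesis using n by simp
  next
    case False
    have fS: "finite S" unfolding S_def by simp
    define t where "t = Max S"
    have "t \<in> S" unfolding t_def using Max_in[OF fS False] .
    hence pt: "p^t \<le> 2*n" unfolding S_def by simp
    have "S \<subseteq> {1..t}" unfolding t_def using fS by (auto simp: S_def)
    hence "card S \<le> t" using card_mono[of "{1..t}" S] by simp
    hence "p ^ card S \<le> p ^ t" using prime_gt_1_nat[OF p] by (intro power_increasing) auto
    thus ?thesis using pt by simp
  qed
  moreover have "p ^ multiplicity p C \<le> p ^ card S" using m prime_gt_1_nat[OF p] by (intro power_increasing) auto
  ultimately show ?thesis unfolding C_def by simp
qed




definition primes_le :: "nat \<Rightarrow> nat set" where
  "primes_le y = {p. prime p \<and> p \<le> y}"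

lemma finite_primes_le[simp]: "finite (primes_le y)"
  unfolding primes_le_def by simp

lemma primes_le_mono: "a \<le> b \<Longrightarrow> card (primes_le a) \<le> card (primes_le b)"
  by (intro card_mono) (auto simp: primes_le_def)

lemma cheb_nat:
  assumes n: "n > 0"
  shows "(2*n) choose n \<le> (2*n) ^ card (primes_le (2*n))"
proof -
  define C where "C = (2*n) choose n"
  have Cpos: "C > 0" unfolding C_def by simp
  have sub: "prime_factors C \<subseteq> primes_le (2*n)"
  proof
    fix p assume "p \<in> prime_factors C"
    hence p: "prime p" "p dvd C" by auto
    have "C dvd fact (2*n)"
      unfolding C_def using binomial_fact_lemma[of n "2*n"] by (metis dvd_triv_right le_add2 mult_2)
    hence "p dvd fact (2*n)" using p(2) by (rule dvd_trans[rotated])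
    hence "p \<le> 2*n" using prime_dvd_fact_iff[OF p(1)] by simp
    thus "p \<in> primes_le (2*n)" using p(1) by (simp add: primes_le_def)
  qed
  have "C = (\<Prod>p\<in>prime_factors C. p ^ multiplicity p C)"
    using prime_factorization_nat[OF Cpos] .
  also have "\<dots> \<le> (\<Prod>p\<in>prime_factors C. 2*n)"
    by (intro prod_mono) (auto simp: C_def intro!: binom_pp n)
  also have "\<dots> = (2*n) ^ card (prime_factors C)" by simp
  also have "\<dots> \<le> (2*n) ^ card (primes_le (2*n))"
    using n by (intro power_increasing card_mono sub) auto
  finally show ?thesis unfolding C_def .
qed

lemma cheb_log:
  assumes y: "y \<ge> 2"
  shows "(real y - 1) * ln 2 - ln y \<le> card (primes_le y) * ln y"
proof -
  define n where "n = y div 2"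
  have n: "n > 0" using y by (simp add: n_def)
  have n2: "2*n \<le> y" "real y - 1 \<le> 2*real n" unfolding n_def by linarith+
  have "4^n / (2*real n) \<le> real ((2*n) choose n)" by (rule central_binomial_lower_bound[OF n])
  also have "\<dots> \<le> real ((2*n) ^ card (primes_le (2*n)))" using cheb_nat[OF n] by linarith
  finally have "ln (4^n / (2*real n)) \<le> ln (real ((2*n) ^ card (primes_le (2*n))))"
    using n by (intro ln_mono) auto
  moreover have "ln (real ((2*n) ^ card (primes_le (2*n)))) = card (primes_le (2*n)) * ln (2*real n)"
  proof -
    have "real ((2*n) ^ card (primes_le (2*n))) = (2*real n) ^ card (primes_le (2*n))" by simp
    thus ?thesis using n by (simp only: ln_realpow)
  qed
  moreover have "ln (4^n / (2*real n)) = n * ln 4 - ln (2*real n)"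
    using n by (simp add: ln_div ln_realpow)
  ultimately have A: "n * ln 4 - ln (2*real n) \<le> card (primes_le (2*n)) * ln (2*real n)"
    by simp
  have B: "ln (2*real n) \<le> ln y" using n n2 by (intro ln_mono) auto
  have "card (primes_le (2*n)) \<le> card (primes_le y)" using n2 by (intro primes_le_mono)
  have D: "n * ln 4 = 2 * n * ln 2"
  proof -
    have "ln (4::real) = ln (2^2)" by simp
    also have "\<dots> = 2 * ln 2" by (subst ln_realpow) auto
    finally show ?thesis by simp
  qed
  have "ln (2*real n) \<ge> 0" using n by simp
  have "(real y - 1) * ln 2 - ln y \<le> card (primes_le (2*n)) * ln (2*real n)"
  proof -
    have "(real y - 1) * ln 2 \<le> (2*real n) * ln 2" using n2(2) by (intro mult_right_mono) auto
    thus ?thesis using A B D by linarith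
  qed
  also have "\<dots> \<le> card (primes_le y) * ln y"
    using \<open>ln (2*real n) \<le> ln y\<close> \<open>ln (2*real n) \<ge> 0\<close> \<open>card (primes_le (2*n)) \<le> card (primes_le y)\<close>
    by (intro mult_mono) auto
  finally show ?thesis .
qed




definition F :: "nat multiset \<Rightarrow> nat" where
  "F M = prod_mset (image_mset fact M)"

lemma F_add[simp]: "F (add_mset p M) = fact p * F M" by (simp add: F_def)
lemma F_empty[simp]: "F {#} = 1" by (simp add: F_def)
lemma F_pos: "F M > 0" by (induction M) auto

lemma mult_fact_self: assumes q: "prime (q::nat)" shows "multiplicity q (fact q :: nat) = 1"
proof -
  obtain r where r: "q = Suc r" using q prime_gt_0_nat by (cases q) auto
  have "(fact q :: nat) = q * fact r" unfolding r by (metis fact_Suc of_nat_id)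
  moreover have "\<not> q dvd fact r" using prime_dvd_fact_iff[OF q] r by simp
  ultimately show ?thesis using q
    by (simp add: prime_elem_multiplicity_mult_distrib not_dvd_imp_multiplicity_0 multiplicity_prime)
qed

lemma mult_F:
  assumes q: "prime (q::nat)"
  shows "(\<forall>p\<in>#M. prime p \<and> p \<le> q) \<Longrightarrow> multiplicity q (F M) = count M q"
proof (induction M)
  case empty then show ?case by simp
next
  case (add p M)
  have p: "prime p" "p \<le> q" using add.prems by auto
  have "multiplicity q (F (add_mset p M)) = multiplicity q (fact p :: nat) + multiplicity q (F M)"
    using q F_pos by (simp add: prime_elem_multiplicity_mult_distrib)
  moreover have "multiplicity q (fact p :: nat) = (if p = q then 1 else 0)"
  proof (cases "p = q")
    case True then show ?thesis using mult_fact_self[OF q] by simp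
  next
    case False
    hence "\<not> q dvd fact p" using prime_dvd_fact_iff[OF q] p by simp
    thus ?thesis using False by (simp add: not_dvd_imp_multiplicity_0)
  qed
  ultimately show ?case using add by auto
qed

lemma F_inj_aux:
  "\<forall>M1 M2. size M1 + size M2 = s \<longrightarrow> (\<forall>p\<in>#M1. prime p) \<longrightarrow> (\<forall>p\<in>#M2. prime p) \<longrightarrow> F M1 = F M2 \<longrightarrow> M1 = M2"
proof (induction s rule: less_induct)
  case (less s)
  show ?case
  proof (intro allI impI)
    fix M1 M2 assume s: "size M1 + size M2 = s" and P1: "\<forall>p\<in>#M1. prime p" and P2: "\<forall>p\<in>#M2. prime p"
      and E: "F M1 = F M2"
    show "M1 = M2"
    proof (cases "M1 + M2 = {#}")
      case True then show ?thesis by simp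
    next
      case False
      define q where "q = Max (set_mset (M1 + M2))"
      have qin: "q \<in># M1 + M2" unfolding q_def using False by (intro Max_in) auto
      have qp: "prime q" using qin P1 P2 by auto
      have le1: "\<forall>p\<in>#M1. prime p \<and> p \<le> q" using P1 unfolding q_def by auto
      have le2: "\<forall>p\<in>#M2. prime p \<and> p \<le> q" using P2 unfolding q_def by auto
      have c: "count M1 q = count M2 q"
        using mult_F[OF qp le1] mult_F[OF qp le2] E by simp
      have "q \<in># M1" "q \<in># M2" using qin c by (auto simp: count_greater_zero_iff[symmetric] simp del: count_greater_zero_iff)
      then obtain N1 N2 where N: "M1 = add_mset q N1" "M2 = add_mset q N2" by (metis mset_add)
      have "F N1 = F N2" using E N by simp
      moreover have "size N1 + size N2 < s" using s N by simp
      ultimately have "N1 = N2" using less.IH P1 P2 N by auto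
      thus ?thesis using N by simp
    qed
  qed
qed

lemma F_inj: "(\<forall>p\<in>#M1. prime p) \<Longrightarrow> (\<forall>p\<in>#M2. prime p) \<Longrightarrow> F M1 = F M2 \<Longrightarrow> M1 = M2"
  using F_inj_aux by blast

lemma F_le: "(\<forall>p\<in>#M. p \<le> y) \<Longrightarrow> F M \<le> fact y ^ size M"
proof (induction M)
  case empty then show ?case by simp
next
  case (add p M)
  have "fact p \<le> (fact y :: nat)" using add.prems by (intro fact_mono) auto
  moreover have "F M \<le> fact y ^ size M" using add by auto
  ultimately show ?case by (simp add: mult_le_mono)
qed

lemma F_jp: "size M > 0 \<Longrightarrow> (\<forall>p\<in>#M. p > 0) \<Longrightarrow> jordan_polya (F M)"
proof -
  assume s: "size M > 0" and pos: "\<forall>p\<in>#M. p > 0"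
  obtain xs where xs: "mset xs = M" using ex_mset by blast
  have "xs \<noteq> []" using s xs by auto
  moreover have "\<forall>a\<in>set xs. 0 < a" using pos xs by auto
  moreover have "F M = prod_list (map fact xs)"
    unfolding F_def xs[symmetric] by (simp add: prod_mset_prod_list mset_map[symmetric] del: mset_map)
  ultimately show ?thesis unfolding jordan_polya_def by blast
qed




lemma count_lb:
  assumes y: "y \<ge> 1" and k: "k \<ge> 1" and kp: "k + 1 \<le> card (primes_le y)"
    and x: "x > 0" and L: "real y * real k * ln (real y) \<le> ln x"
  shows "4^k / (2 * real k) \<le> real (JP_count x)"
proof -
  obtain P where P: "P \<subseteq> primes_le y" "card P = k + 1"
    using obtain_subset_with_card_n[OF kp] by blast
  have fP: "finite P" using P(1) finite_primes_le by (rule finite_subset)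
  define MS where "MS = multisets_of_size P k"
  have cMS: "card MS = (2*k) choose k"
    unfolding MS_def using card_multisets_of_size[OF fP, of k] P(2) by (simp add: mult_2)
  define J where "J = {n :: nat. 0 < n \<and> real n \<le> x \<and> jordan_polya n}"
  have fJ: "finite J"
  proof (rule finite_subset)
    show "J \<subseteq> {..nat \<lfloor>x\<rfloor>}" unfolding J_def by (auto simp: le_nat_floor)
  qed simp
  have inj: "inj_on F MS"
  proof (rule inj_onI)
    fix M1 M2 assume "M1 \<in> MS" "M2 \<in> MS" "F M1 = F M2"
    thus "M1 = M2" using P(1) by (intro F_inj) (auto simp: MS_def multisets_of_size_def primes_le_def)
  qed
  have img: "F ` MS \<subseteq> J"
  proof
    fix n assume "n \<in> F ` MS"
    then obtain M where M: "M \<in> MS" "n = F M" by blast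
    have sM: "set_mset M \<subseteq> primes_le y" "size M = k"
      using M(1) P(1) by (auto simp: MS_def multisets_of_size_def)
    have jp: "jordan_polya n" unfolding M(2)
      using sM k by (intro F_jp) (auto simp: primes_le_def prime_gt_0_nat)
    have "F M \<le> fact y ^ k" using F_le[of M y] sM by (auto simp: primes_le_def)
    hence "real (F M) \<le> real (fact y ^ k)" by linarith
    also have "\<dots> = (fact y) ^ k" by simp
    also have "\<dots> \<le> (real y ^ y) ^ k"
      by (intro power_mono) (use fact_le_power[of y, where 'a=real] in auto)
    also have "\<dots> = real y ^ (y*k)" by (simp add: power_mult)
    also have "\<dots> = real y powr (real (y*k))" using y by (subst powr_realpow) auto
    also have "\<dots> = exp (real y * real k * ln (real y))" using y by (simp add: powr_def mult.commute)
    also have "\<dots> \<le> exp (ln x)" using L by simp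
    also have "\<dots> = x" using x by simp
    finally have "real n \<le> x" using M by simp
    thus "n \<in> J" using jp M F_pos unfolding J_def by auto
  qed
  have "card MS \<le> card J" using card_inj_on_le[OF inj img fJ] .
  hence "real ((2*k) choose k) \<le> real (JP_count x)" using cMS unfolding JP_count_def J_def by simp
  moreover have "4^k / (2 * real k) \<le> real ((2*k) choose k)" using k by (intro central_binomial_lower_bound) simp
  ultimately show ?thesis by simp
qed




lemma E1: "eventually (\<lambda>L::real. L \<le> (25/24) * L - (5/4 * sqrt L + 1) * (1 + 2 * ln (5/4 * sqrt L + 1))) at_top"
  by real_asymp
lemma E2: "eventually (\<lambda>L::real. 2 * sqrt L / ln L \<le> (L / ((5/4 * sqrt L + 1) * ln (5/4 * sqrt L + 1)) - 1) * (4/3) - ln (2*L)) at_top"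
  by real_asymp
lemma E3: "eventually (\<lambda>L::real. 2 \<le> L / ((5/4 * sqrt L + 1) * ln (5/4 * sqrt L + 1))) at_top"
  by real_asymp
lemma E4: "eventually (\<lambda>L::real. 3 \<le> 5/4 * sqrt L) at_top"
  by real_asymp

lemma core:
  fixes x L s :: real
  assumes x: "x > 0" and Ld: "L = ln x" and sd: "s = 5/4 * sqrt L"
    and e1: "L \<le> (25/24) * L - (s + 1) * (1 + 2 * ln (s + 1))"
    and e2: "2 * sqrt L / ln L \<le> (L / ((s + 1) * ln (s + 1)) - 1) * (4/3) - ln (2*L)"
    and e3: "2 \<le> L / ((s + 1) * ln (s + 1))"
    and e4: "3 \<le> s"
  shows "exp (2 * sqrt L / ln L) \<le> real (JP_count x)"
proof -
  have "sqrt L \<ge> 12/5" using e4 sd by simp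
  hence "sqrt L > 0" by linarith
  hence Lpos: "L > 0" by simp
  define y where "y = nat \<lceil>s\<rceil>"
  have ys: "s \<le> real y" "real y \<le> s + 1" unfolding y_def using e4 by linarith+
  have y3: "y \<ge> 3" using ys e4 by linarith
  have ln2: "2/3 \<le> ln (2::real)" "ln (2::real) \<le> 1" using ln2_ge_two_thirds ln_2_less_1 by auto
  have "ln 2 \<le> ln (real y)" using y3 by (intro ln_mono) auto
  hence lny: "ln (real y) \<ge> 2/3" using ln2 by linarith
  have ylny_le: "real y * ln (real y) \<le> (s+1) * ln (s+1)"
    using ys y3 lny by (intro mult_mono ln_mono) auto
  have ylny_ge: "real y * ln (real y) \<ge> 1"
  proof -
    have "real y * ln (real y) \<ge> 3 * (2/3)" using y3 lny by (intro mult_mono) auto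
    thus ?thesis by simp
  qed
  define A where "A = L / (real y * ln (real y))"
  have A_ge: "A \<ge> L / ((s + 1) * ln (s + 1))"
    unfolding A_def using Lpos ylny_ge ylny_le by (intro divide_left_mono) auto
  have A_le: "A \<le> L" unfolding A_def using Lpos ylny_ge by (simp add: divide_le_eq)
  define k where "k = nat \<lfloor>A\<rfloor>"
  have ks: "real k \<le> A" "A - 1 < real k" unfolding k_def using A_ge e3 by linarith+
  have k1: "k \<ge> 1" using ks A_ge e3 by linarith
  have ykL: "real y * real k * ln (real y) \<le> L"
  proof -
    have "real y * real k * ln (real y) = real k * (real y * ln (real y))" by simp
    also have "\<dots> \<le> A * (real y * ln (real y))" using ks ylny_ge by (intro mult_right_mono) auto
    also have "\<dots> = L" unfolding A_def using y3 lny by (simp add: field_simps)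
    finally show ?thesis .
  qed
  have kp: "k + 1 \<le> card (primes_le y)"
  proof -
    have ch: "(real y - 1) * ln 2 - ln y \<le> card (primes_le y) * ln y" using cheb_log y3 by simp
    have "real y * ((real k + 1) * ln (real y)) = real y * real k * ln (real y) + real y * ln (real y)"
      by (simp add: algebra_simps)
    also have "\<dots> \<le> L + real y * ln (real y)" using ykL by simp
    also have "\<dots> \<le> real y * ((real y - 1) * ln 2 - ln y)"
    proof -
      have "real y * ((real y - 1) * ln 2 - ln y) = real y * real y * ln 2 - real y * ln 2 - real y * ln y"
        by (simp add: algebra_simps)
      moreover have "real y * real y * ln 2 \<ge> s * s * (2/3)"
        using ys e4 ln2 by (intro mult_mono) auto
      moreover have "s * s = 25/16 * L"
      proof -
        have "s * s = (5/4 * sqrt L)^2" unfolding sd by (simp only: power2_eq_square)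
        also have "\<dots> = (5/4)^2 * (sqrt L)^2" by (rule power_mult_distrib)
        also have "(sqrt L)^2 = L" using Lpos by simp
        finally show ?thesis by (simp add: power2_eq_square)
      qed
      moreover have "real y * ln 2 \<le> s + 1"
      proof -
        have "real y * ln 2 \<le> real y * 1" using ln2 by (intro mult_left_mono) auto
        thus ?thesis using ys by linarith
      qed
      moreover have "2 * (real y * ln y) \<le> (s+1) * (2 * ln (s+1))" using ylny_le by simp
      moreover have "(s+1)*(1+2*ln(s+1)) = (s+1) + (s+1)*(2*ln(s+1))" by (simp add: algebra_simps)
      ultimately show ?thesis using e1 by linarith
    qed
    finally have "(real k + 1) * ln (real y) \<le> (real y - 1) * ln 2 - ln y"
      using y3 by (simp add: mult_le_cancel_left_pos)
    hence "(real k + 1) * ln (real y) \<le> card (primes_le y) * ln y" using ch by linarith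
    hence "real k + 1 \<le> card (primes_le y)" using lny by (simp add: mult_le_cancel_right)
    thus ?thesis by linarith
  qed
  have cnt: "4^k / (2 * real k) \<le> real (JP_count x)"
    using count_lb[of y k x] y3 k1 kp x ykL Ld by simp
  have "(L / ((s + 1) * ln (s + 1)) - 1) * (4/3) \<le> (A - 1) * (4/3)" using A_ge by (intro mult_right_mono) auto
  hence "2 * sqrt L / ln L \<le> (A - 1) * (4/3) - ln (2*L)" using e2 by linarith
  also have "\<dots> \<le> real k * ln 4 - ln (2 * real k)"
  proof -
    have "ln (4::real) = 2 * ln 2"
    proof -
      have "ln (4::real) = ln (2^2)" by simp
      also have "\<dots> = 2 * ln 2" by (subst ln_realpow) auto
      finally show ?thesis .
    qed
    hence "(A - 1) * (4/3) \<le> real k * ln 4"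
    proof -
      assume l4: "ln (4::real) = 2 * ln 2"
      have "(A - 1) * (4/3) \<le> real k * (4/3)" using ks by (intro mult_right_mono) auto
      also have "\<dots> \<le> real k * ln 4" using l4 ln2 by (intro mult_left_mono) auto
      finally show ?thesis .
    qed
    moreover have "ln (2 * real k) \<le> ln (2*L)" using ks A_le k1 by (intro ln_mono) auto
    ultimately show ?thesis by linarith
  qed
  also have "\<dots> = ln (4^k / (2 * real k))" using k1 by (simp add: ln_div ln_realpow)
  finally have le: "2 * sqrt L / ln L \<le> ln (4^k / (2 * real k))" .
  have pos: "(4::real)^k / (2 * real k) > 0" using k1 by simp
  have "exp (2 * sqrt L / ln L) \<le> exp (ln (4^k / (2 * real k)))" using le by simp
  hence "exp (2 * sqrt L / ln L) \<le> 4^k / (2 * real k)" using pos by simp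
  thus ?thesis using cnt by linarith
qed

theorem mainTheorem2:
  fixes \<epsilon> :: real
  assumes "\<epsilon> > 0"
  shows "\<exists>x2 :: real. \<forall>x \<ge> x2.
           real (JP_count x) > exp ((2 - \<epsilon>) * sqrt (ln x) / ln (ln x))"
proof -
  have "eventually (\<lambda>L::real. (L \<le> (25/24) * L - (5/4 * sqrt L + 1) * (1 + 2 * ln (5/4 * sqrt L + 1))) \<and>
     (2 * sqrt L / ln L \<le> (L / ((5/4 * sqrt L + 1) * ln (5/4 * sqrt L + 1)) - 1) * (4/3) - ln (2*L)) \<and>
     (2 \<le> L / ((5/4 * sqrt L + 1) * ln (5/4 * sqrt L + 1))) \<and> (3 \<le> 5/4 * sqrt L) \<and> L \<ge> 3) at_top"
    using eventually_conj[OF E1 eventually_conj[OF E2 eventually_conj[OF E3 eventually_conj[OF E4 eventually_ge_at_top[of 3]]]]] .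
  then obtain L0 where L0: "\<And>L. L \<ge> L0 \<Longrightarrow> (L \<le> (25/24) * L - (5/4 * sqrt L + 1) * (1 + 2 * ln (5/4 * sqrt L + 1))) \<and>
     (2 * sqrt L / ln L \<le> (L / ((5/4 * sqrt L + 1) * ln (5/4 * sqrt L + 1)) - 1) * (4/3) - ln (2*L)) \<and>
     (2 \<le> L / ((5/4 * sqrt L + 1) * ln (5/4 * sqrt L + 1))) \<and> (3 \<le> 5/4 * sqrt L) \<and> L \<ge> 3"
    unfolding eventually_at_top_linorder by blast
  show ?thesis
  proof (intro exI allI impI)
    fix x :: real assume x: "x \<ge> exp L0"
    have xpos: "x > 0" using less_le_trans[OF exp_gt_zero x] .
    have L: "ln x \<ge> L0" using x xpos by (metis exp_le_cancel_iff exp_ln)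
    note H = L0[OF L]
    have "exp (2 * sqrt (ln x) / ln (ln x)) \<le> real (JP_count x)"
      by (rule core[OF xpos refl refl]) (use H in auto)
    moreover have "(2 - \<epsilon>) * sqrt (ln x) / ln (ln x) < 2 * sqrt (ln x) / ln (ln x)"
    proof -
      have "ln (ln x) > 0" using H by simp
      moreover have "sqrt (ln x) > 0" using H by simp
      ultimately show ?thesis using assms by (simp add: divide_strict_right_mono)
    qed
    ultimately show "real (JP_count x) > exp ((2 - \<epsilon>) * sqrt (ln x) / ln (ln x))"
      by (meson exp_less_cancel_iff less_le_trans)
  qed
qed



end
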